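(* Let $\mathcal{H}$ be a real Hilbert space, $A:\mathcal{H}\rightrightarrows\mathcal{H}$ maximal monotone with $A^{-1}(0)\neq\emptyset$, $\theta>0$, $p\geq1$ an integer, and suppose $(x,\lambda):[0,t_0]\to\mathcal{H}\times(0,+\infty)$ is a solution of \[ \dot{x}(t)+x(t)-(I+\lambda(t)A)^{-1}x(t)=0,\qquad \lambda(t)\,\|(I+\lambda(t)A)^{-1}x(t)-x(t)\|^{p-1}=\theta, \] with $x(0)\in\{x:0\notin Ax\}$, $x$ continuously differentiable and $\lambda$ locally Lipschitz. Then $\lambda(\cdot)$ is nondecreasing.
   Context: $(I+\lambda A)^{-1}$ is the resolvent of $A$ of index $\lambda>0$. *)

theory Defs
  imports "HOL-Analysis.Analysis"
begin

definition monotone_op :: "('a::real_inner \<Rightarrow> 'a set) \<Rightarrow> bool" where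
  "monotone_op A \<longleftrightarrow> (\<forall>x y u v. u \<in> A x \<longrightarrow> v \<in> A y \<longrightarrow> inner (x - y) (u - v) \<ge> 0)"

definition maximal_monotone :: "('a::real_inner \<Rightarrow> 'a set) \<Rightarrow> bool" where
  "maximal_monotone A \<longleftrightarrow> monotone_op A \<and>
     (\<forall>B. monotone_op B \<and> (\<forall>x. A x \<subseteq> B x) \<longrightarrow> B = A)"

text \<open>Resolvent (I + lam A)^{-1} x: the (unique, for maximal monotone A and lam > 0) y with
  x \<in> y + lam A y.\<close>
definition resolvent :: "('a::real_inner \<Rightarrow> 'a set) \<Rightarrow> real \<Rightarrow> 'a \<Rightarrow> 'a" where
  "resolvent A lam x = (THE y. \<exists>v \<in> A y. x = y + lam *\<^sub>R v)"

definition locally_lipschitz_on :: "real set \<Rightarrow> (real \<Rightarrow> real) \<Rightarrow> bool" where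
  "locally_lipschitz_on S f \<longleftrightarrow>
     (\<forall>t\<in>S. \<exists>e>0. \<exists>L. lipschitz_on L (S \<inter> cball t e) f)"

end

theory Submission
  imports Defs
begin


lemma maxrel:
  fixes A :: "'a::real_inner \<Rightarrow> 'a set"
  assumes mm: "maximal_monotone A"
    and rel: "\<And>y v. v \<in> A y \<Longrightarrow> inner (a - y) (b - v) \<ge> 0"
  shows "b \<in> A a"
proof -
  define B where "B = (\<lambda>y. if y = a then insert b (A y) else A y)"
  have mA: "monotone_op A" using mm unfolding maximal_monotone_def by blast
  have Bcases: "u \<in> B x \<Longrightarrow> (x = a \<and> u = b) \<or> u \<in> A x" for u x
    unfolding B_def by (cases "x = a") auto
  have "monotone_op B"
    unfolding monotone_op_def
  proof (intro allI impI)
    fix x y u v assume u: "u \<in> B x" and v: "v \<in> B y"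
    have sym: "inner (x - y) (u - v) = inner (y - x) (v - u)"
      by (simp add: inner_diff_left inner_diff_right)
    from Bcases[OF u] Bcases[OF v]
    show "inner (x - y) (u - v) \<ge> 0"
    proof (elim disjE conjE)
      assume "x = a" "u = b" "y = a" "v = b" then show ?thesis by simp
    next
      assume "x = a" "u = b" "v \<in> A y" then show ?thesis using rel[of v y] by simp
    next
      assume "u \<in> A x" "y = a" "v = b" then show ?thesis using rel[of u x] sym by simp
    next
      assume "u \<in> A x" "v \<in> A y" then show ?thesis using mA unfolding monotone_op_def by blast
    qed
  qed
  moreover have "\<forall>x. A x \<subseteq> B x" unfolding B_def by auto
  ultimately have "B = A" using mm unfolding maximal_monotone_def by (elim conjE allE[of _ B]) simp
  then have "B a = A a" by simp
  then show ?thesis unfolding B_def by (metis insert_absorb2 insertI1)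
qed

lemma nsq_add: "norm (a + b) ^ 2 = norm a ^ 2 + 2 * inner a b + norm (b::'a::real_inner) ^ 2"
  by (simp add: power2_norm_eq_inner inner_add_left inner_add_right inner_commute)

lemma nsq_diff: "norm (a - b) ^ 2 = norm a ^ 2 - 2 * inner a b + norm (b::'a::real_inner) ^ 2"
  by (simp add: power2_norm_eq_inner inner_diff_left inner_diff_right inner_commute)

lemma nsq_line: "norm (a + t *\<^sub>R d) ^ 2 = norm a ^ 2 + 2 * t * inner a d + t ^ 2 * norm (d::'a::real_inner) ^ 2"
  unfolding power2_norm_eq_inner by (simp add: inner_add_left inner_add_right inner_commute power2_eq_square algebra_simps)

lemma le_lim0:
  fixes m B D :: real
  assumes "\<And>t. 0 < t \<Longrightarrow> t \<le> 1 \<Longrightarrow> m \<le> B + t * D" and "D \<ge> 0"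
  shows "m \<le> B"
proof (rule ccontr)
  assume "\<not> m \<le> B"
  define t where "t = min 1 ((m - B) / (2 * (D + 1)))"
  have t0: "0 < t" "t \<le> 1" using \<open>\<not> m \<le> B\<close> \<open>D \<ge> 0\<close> by (auto simp: t_def)
  have "t * D \<le> (m - B) / (2 * (D + 1)) * D"
    using \<open>D \<ge> 0\<close> by (intro mult_right_mono) (auto simp: t_def)
  also have "\<dots> < m - B"
  proof -
    have "(m - B) / (2 * (D + 1)) * D = (m - B) * (D / (2 * (D + 1)))" by simp
    also have "\<dots> < (m - B) * 1"
      using \<open>\<not> m \<le> B\<close> \<open>D \<ge> 0\<close> by (intro mult_strict_left_mono) (auto simp: field_simps)
    finally show ?thesis by simp
  qed
  finally show False using assms(1)[OF t0] by argo
qed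

lemma minty_core:
  fixes G :: "'a::{real_inner,complete_space} \<Rightarrow> 'a \<Rightarrow> bool"
  assumes mono: "\<And>y v y' v'. G y v \<Longrightarrow> G y' v' \<Longrightarrow> inner (y - y') (v - v') \<ge> 0"
    and maxr: "\<And>a b. (\<And>y v. G y v \<Longrightarrow> inner (a - y) (b - v) \<ge> 0) \<Longrightarrow> G a b"
    and ne: "G y0 v0"
  shows "\<exists>a. G a (-a)"
proof -
  define L where "L y v x u = inner x v + inner y u - inner y v" for y v x u :: 'a
  define P where "P x u c \<longleftrightarrow> (\<forall>y v. G y v \<longrightarrow> L y v x u + (norm x ^ 2 + norm u ^ 2) / 2 \<le> c)"
    for x u :: 'a and c :: real
  define S where "S = {c. \<exists>x u. P x u c}"
  define m where "m = Inf S"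
  have Lgraph: "L y v y' v' \<le> inner y' v'" if "G y v" "G y' v'" for y v y' v'
  proof -
    have "inner (y' - y) (v' - v) \<ge> 0" using mono[OF that(2,1)] .
    then show ?thesis unfolding L_def inner_diff_left inner_diff_right by argo
  qed
  have P_mono: "P x u c \<Longrightarrow> c \<le> c' \<Longrightarrow> P x u c'" for x u c c'
    unfolding P_def by force
  have c0S: "inner y0 v0 + (norm y0 ^ 2 + norm v0 ^ 2) / 2 \<in> S"
  proof -
    have "P y0 v0 (inner y0 v0 + (norm y0 ^ 2 + norm v0 ^ 2) / 2)"
      unfolding P_def using Lgraph[OF _ ne] by (intro allI impI) (simp add: add_right_mono)
    then show ?thesis unfolding S_def by blast
  qed
  define lb where "lb = - inner y0 v0 - norm v0 ^ 2 / 2 - norm y0 ^ 2 / 2"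
  have lbS: "lb \<le> c" if cS: "c \<in> S" for c
  proof -
    obtain x u where "P x u c" using cS unfolding S_def by blast
    then have h: "L y0 v0 x u + (norm x ^ 2 + norm u ^ 2) / 2 \<le> c" using ne unfolding P_def by blast
    have "0 \<le> norm (x + v0) ^ 2" "0 \<le> norm (y0 + u) ^ 2" by auto
    then have q1: "inner x v0 \<ge> - (norm x ^ 2 / 2) - norm v0 ^ 2 / 2"
      and q2: "inner y0 u \<ge> - (norm y0 ^ 2 / 2) - norm u ^ 2 / 2" unfolding nsq_add by simp_all
    show ?thesis using h q1 q2 unfolding lb_def L_def by argo
  qed
  have Sne: "S \<noteq> {}" using c0S by blast
  have Sbdd: "bdd_below S" by (rule bdd_belowI[of _ lb]) (rule lbS)
  have mS: "m \<le> c" if "c \<in> S" for c unfolding m_def by (rule cInf_lower[OF that Sbdd])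
  have approx: "\<exists>z. P (fst z) (snd z) (m + 1 / real (Suc n))" for n
  proof -
    have "m < m + 1 / real (Suc n)" by simp
    then obtain c where "c \<in> S" "c < m + 1 / real (Suc n)"
      using cInf_less_iff[OF Sne Sbdd] unfolding m_def by blast
    then obtain x u where "P x u c" unfolding S_def by blast
    then have "P x u (m + 1 / real (Suc n))" using P_mono \<open>c < _\<close> by simp
    then show ?thesis by (intro exI[of _ "(x, u)"]) simp
  qed
  obtain f where f: "\<And>n. P (fst (f n)) (snd (f n)) (m + 1 / real (Suc n))"
    using approx by metis
  define X where "X n = fst (f n)" for n
  define U where "U n = snd (f n)" for n
  have XU: "P (X n) (U n) (m + 1 / real (Suc n))" for n using f unfolding X_def U_def by blast
  have mid: "P ((1/2) *\<^sub>R (a + a')) ((1/2) *\<^sub>R (b + b'))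
      (c / 2 + c' / 2 - (norm (a - a') ^ 2 + norm (b - b') ^ 2) / 8)"
    if "P a b c" "P a' b' c'" for a b a' b' c c'
    unfolding P_def
  proof (intro allI impI)
    fix y v assume G: "G y v"
    have h1: "L y v a b + (norm a ^ 2 + norm b ^ 2) / 2 \<le> c" using that(1) G unfolding P_def by blast
    have h2: "L y v a' b' + (norm a' ^ 2 + norm b' ^ 2) / 2 \<le> c'" using that(2) G unfolding P_def by blast
    have eL: "L y v ((1/2) *\<^sub>R (a + a')) ((1/2) *\<^sub>R (b + b')) = (L y v a b + L y v a' b') / 2"
      unfolding L_def by (simp add: inner_add_left inner_add_right algebra_simps)
    have en: "norm ((1/2) *\<^sub>R (z + z')) ^ 2 = norm z ^ 2 / 2 + norm z' ^ 2 / 2 - norm (z - z') ^ 2 / 4"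
      for z z' :: 'a
    proof -
      have "norm ((1/2) *\<^sub>R (z + z')) ^ 2 = norm (z + z') ^ 2 / 4"
        by (simp add: power2_eq_square)
      then show ?thesis unfolding nsq_add nsq_diff by argo
    qed
    show "L y v ((1/2) *\<^sub>R (a + a')) ((1/2) *\<^sub>R (b + b')) +
        (norm ((1/2) *\<^sub>R (a + a')) ^ 2 + norm ((1/2) *\<^sub>R (b + b')) ^ 2) / 2
        \<le> c / 2 + c' / 2 - (norm (a - a') ^ 2 + norm (b - b') ^ 2) / 8"
      unfolding eL en using h1 h2 by argo
  qed
  have cauchy_bd: "norm (X n - X k) ^ 2 + norm (U n - U k) ^ 2 \<le> 4 * (1 / real (Suc n) + 1 / real (Suc k))"
    for n k
  proof -
    have "m \<le> (m + 1 / real (Suc n)) / 2 + (m + 1 / real (Suc k)) / 2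
        - (norm (X n - X k) ^ 2 + norm (U n - U k) ^ 2) / 8"
      using mid[OF XU[of n] XU[of k]] by (intro mS) (unfold S_def, blast)
    then show ?thesis by argo
  qed
  have cauchy_gen: "Cauchy Y" if Yb: "\<And>n k. norm (Y n - Y k) ^ 2 \<le> 4 * (1 / real (Suc n) + 1 / real (Suc k))"
    for Y :: "nat \<Rightarrow> 'a"
  proof (rule CauchyI)
    fix e :: real assume e: "0 < e"
    obtain M :: nat where M: "8 / e ^ 2 < real M" using reals_Archimedean2 by blast
    show "\<exists>M. \<forall>m\<ge>M. \<forall>n\<ge>M. norm (Y m - Y n) < e"
    proof (intro exI allI impI)
      fix n k assume nk: "M \<le> n" "M \<le> k"
      have "1 / real (Suc n) \<le> 1 / real (Suc M)" "1 / real (Suc k) \<le> 1 / real (Suc M)"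
        using nk by (auto intro!: divide_left_mono)
      then have "norm (Y n - Y k) ^ 2 \<le> 8 / real (Suc M)" using Yb[of n k] by argo
      also have "\<dots> < e ^ 2"
      proof -
        have "8 < e ^ 2 * real M" using M e by (simp add: field_simps)
        then have "8 < e ^ 2 * real (Suc M)" using e by (smt (verit) mult_left_mono of_nat_Suc zero_le_power2)
        then show ?thesis by (simp add: field_simps)
      qed
      finally show "norm (Y n - Y k) < e" using e by (smt (verit) power_mono norm_ge_zero)
    qed
  qed
  have "Cauchy X" by (rule cauchy_gen) (use cauchy_bd in \<open>smt (verit) zero_le_power2\<close>)
  then obtain xb where xb: "X \<longlonglongrightarrow> xb" using Cauchy_convergent_iff convergent_def by blast
  have "Cauchy U" by (rule cauchy_gen) (use cauchy_bd in \<open>smt (verit) zero_le_power2\<close>)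
  then obtain ub where ub: "U \<longlonglongrightarrow> ub" using Cauchy_convergent_iff convergent_def by blast
  define Nb where "Nb = (norm xb ^ 2 + norm ub ^ 2) / 2"
  have Pb: "P xb ub m" unfolding P_def
  proof (intro allI impI)
    fix y v assume G: "G y v"
    have l1: "(\<lambda>n. L y v (X n) (U n) + (norm (X n) ^ 2 + norm (U n) ^ 2) / 2)
        \<longlonglongrightarrow> L y v xb ub + (norm xb ^ 2 + norm ub ^ 2) / 2"
      unfolding L_def by (intro tendsto_intros xb ub) simp
    have l2: "(\<lambda>n. m + 1 / real (Suc n)) \<longlonglongrightarrow> m + 0"
      by (intro tendsto_intros LIMSEQ_Suc[OF lim_1_over_n])
    show "L y v xb ub + (norm xb ^ 2 + norm ub ^ 2) / 2 \<le> m"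
      using LIMSEQ_le[OF l1 l2] XU G unfolding P_def by auto
  qed
  have var: "m \<le> Nb + inner y' v' + (inner xb (y' - xb) + inner ub (v' - ub))"
    if G': "G y' v'" for y' v'
  proof (rule le_lim0)
    fix t :: real assume t: "0 < t" "t \<le> 1"
    define xt where "xt = xb + t *\<^sub>R (y' - xb)"
    define ut where "ut = ub + t *\<^sub>R (v' - ub)"
    define K where "K = inner xb (y' - xb) + inner ub (v' - ub)"
    define D where "D = (norm (y' - xb) ^ 2 + norm (v' - ub) ^ 2) / 2"
    have Nt: "(norm xt ^ 2 + norm ut ^ 2) / 2 = Nb + t * K + t ^ 2 * D"
      unfolding xt_def ut_def Nb_def K_def D_def nsq_line
      by (simp add: algebra_simps power2_norm_eq_inner, argo?)
    have "P xt ut ((1 - t) * (m - Nb) + t * inner y' v' + (norm xt ^ 2 + norm ut ^ 2) / 2)"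
      unfolding P_def
    proof (intro allI impI)
      fix y v assume G: "G y v"
      have eL: "L y v xt ut = (1 - t) * L y v xb ub + t * L y v y' v'"
        unfolding L_def xt_def ut_def
        by (simp add: inner_add_left inner_add_right inner_diff_left inner_diff_right algebra_simps)
      have "L y v xb ub + Nb \<le> m" using Pb G unfolding P_def Nb_def by blast
      moreover have "L y v y' v' \<le> inner y' v'" using Lgraph[OF G G'] .
      ultimately have "(1 - t) * L y v xb ub + t * L y v y' v' \<le> (1 - t) * (m - Nb) + t * inner y' v'"
        using t by (intro add_mono mult_left_mono) auto
      then show "L y v xt ut + (norm xt ^ 2 + norm ut ^ 2) / 2
          \<le> (1 - t) * (m - Nb) + t * inner y' v' + (norm xt ^ 2 + norm ut ^ 2) / 2"
        unfolding eL by argo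
    qed
    then have "m \<le> (1 - t) * (m - Nb) + t * inner y' v' + (Nb + t * K + t ^ 2 * D)"
      unfolding Nt by (intro mS) (auto simp: S_def)
    then have "t * m \<le> t * (Nb + inner y' v' + K + t * D)"
      by (simp add: algebra_simps power2_eq_square)
    then have "m \<le> Nb + inner y' v' + K + t * D" using t by simp
    then show "m \<le> Nb + inner y' v' + (inner xb (y' - xb) + inner ub (v' - ub)) + t * D"
      unfolding K_def by simp
  next
    show "0 \<le> (norm (y' - xb) ^ 2 + norm (v' - ub) ^ 2) / 2" by simp
  qed
  define a where "a = (1/2) *\<^sub>R (xb - ub)"
  have "G a (- a)"
  proof (rule maxr)
    fix y v assume G: "G y v"
    have h1: "L y v xb ub + Nb \<le> m" using Pb G unfolding P_def Nb_def by blast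
    have h2: "m \<le> Nb + inner y v + (inner xb (y - xb) + inner ub (v - ub))" using var[OF G] .
    have h3: "0 \<le> inner (xb + ub) (xb + ub)" by simp
    have "4 * inner (a - y) (- a - v) = 2 * (inner y v + (inner xb (y - xb) + inner ub (v - ub)) - L y v xb ub)
        + inner (xb + ub) (xb + ub)"
      unfolding a_def L_def
      by (simp add: inner_add_left inner_add_right inner_diff_left inner_diff_right inner_commute algebra_simps)
    then show "0 \<le> inner (a - y) (- a - v)" using h1 h2 h3 by argo
  qed
  then show ?thesis by blast
qed


lemma minty:
  fixes A :: "'a::{real_inner,complete_space} \<Rightarrow> 'a set"
  assumes mm: "maximal_monotone A" and zer: "\<exists>z. 0 \<in> A z" and lam: "lam > 0"
  shows "\<exists>y. \<exists>v\<in>A y. z = y + lam *\<^sub>R v"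
proof -
  define G where "G w b \<longleftrightarrow> (1/lam) *\<^sub>R b \<in> A (w + z)" for w b
  have mA: "monotone_op A" using mm unfolding maximal_monotone_def by blast
  obtain z0 where z0: "0 \<in> A z0" using zer by blast
  have "\<exists>a. G a (-a)"
  proof (rule minty_core)
    fix y v y' v' assume "G y v" "G y' v'"
    then have "inner ((y + z) - (y' + z)) ((1/lam) *\<^sub>R v - (1/lam) *\<^sub>R v') \<ge> 0"
      using mA unfolding G_def monotone_op_def by blast
    also have "inner ((y + z) - (y' + z)) ((1/lam) *\<^sub>R v - (1/lam) *\<^sub>R v') = (1/lam) * inner (y - y') (v - v')"
      by (simp add: inner_diff_right[symmetric] scaleR_diff_right[symmetric])
    finally show "inner (y - y') (v - v') \<ge> 0" using lam by (simp add: zero_le_divide_iff)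
  next
    fix a b assume H: "\<And>y v. G y v \<Longrightarrow> 0 \<le> inner (a - y) (b - v)"
    have "(1/lam) *\<^sub>R b \<in> A (a + z)"
    proof (rule maxrel[OF mm])
      fix y v assume v: "v \<in> A y"
      have "G (y - z) (lam *\<^sub>R v)" unfolding G_def using v lam by simp
      then have "0 \<le> inner (a - (y - z)) (b - lam *\<^sub>R v)" by (rule H)
      also have "inner (a - (y - z)) (b - lam *\<^sub>R v) = lam * inner (a + z - y) ((1/lam) *\<^sub>R b - v)"
      proof -
        have "b - lam *\<^sub>R v = lam *\<^sub>R ((1/lam) *\<^sub>R b - v)" using lam by (simp add: scaleR_diff_right)
        moreover have "a - (y - z) = a + z - y" by simp
        ultimately show ?thesis by (metis inner_scaleR_right)
      qed
      finally show "0 \<le> inner (a + z - y) ((1/lam) *\<^sub>R b - v)" using lam by (simp add: zero_le_mult_iff)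
    qed
    then show "G a b" unfolding G_def .
  next
    show "G (z0 - z) 0" unfolding G_def using z0 by simp
  qed
  then obtain a where "G a (-a)" by blast
  then have "(1/lam) *\<^sub>R (-a) \<in> A (a + z)" unfolding G_def .
  moreover have "z = (a + z) + lam *\<^sub>R ((1/lam) *\<^sub>R (-a))" using lam by simp
  ultimately show ?thesis by blast
qed

lemma resolvent_prop:
  fixes A :: "'a::{real_inner,complete_space} \<Rightarrow> 'a set"
  assumes mm: "maximal_monotone A" and zer: "\<exists>z. 0 \<in> A z" and lam: "lam > 0"
  shows "(1/lam) *\<^sub>R (z - resolvent A lam z) \<in> A (resolvent A lam z)"
proof -
  have mA: "monotone_op A" using mm unfolding maximal_monotone_def by blast
  obtain y v where yv: "v \<in> A y" "z = y + lam *\<^sub>R v" using minty[OF mm zer lam] by blast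
  have uniq: "y' = y" if "v' \<in> A y'" "z = y' + lam *\<^sub>R v'" for y' v'
  proof -
    have m: "inner (y' - y) (v' - v) \<ge> 0" using mA that(1) yv(1) unfolding monotone_op_def by blast
    have e: "y' - y = lam *\<^sub>R (v - v')" using that(2) yv(2) by (simp add: algebra_simps)
    have "inner (y' - y) (v' - v) = - lam * inner (v - v') (v - v')"
      unfolding e by (simp add: inner_diff_right inner_diff_left algebra_simps)
    then have "lam * inner (v - v') (v - v') \<le> 0" using m by simp
    then have "inner (v - v') (v - v') \<le> 0" using lam by (simp add: mult_le_0_iff)
    then have "v = v'" using inner_gt_zero_iff[of "v - v'"] by (simp add: not_less[symmetric])
    then show ?thesis using e by simp
  qed
  have "resolvent A lam z = y"
    unfolding resolvent_def
    by (rule the_equality) (use yv uniq in blast)+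
  then show ?thesis using yv lam by simp
qed




lemma quad_est:
  fixes \<mu> h D I1 I2 R Na Nb \<eta> :: real
  assumes mu: "\<mu> > 0" and h: "0 < h" "h \<le> 1" and D: "D \<ge> 0" and R: "R \<ge> 0"
    and F4: "\<mu> * D^2 \<le> I2 - h * \<mu> * I1" and F2: "Na = Nb + 2 * I1 + D^2"
    and F3: "I2 \<le> R * D" and Re: "R \<le> \<eta> * h"
  shows "\<mu>^2 * (Na - Nb) \<le> \<eta>^2 * h"
proof -
  have e1: "h * \<mu>^2 * (Na - Nb) = 2 * \<mu> * (h * \<mu> * I1) + h * (\<mu>^2 * D^2)"
    unfolding F2 by (simp add: algebra_simps power2_eq_square)
  have e2: "2 * \<mu> * (h * \<mu> * I1) \<le> 2 * \<mu> * (I2 - \<mu> * D^2)"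
    using F4 mu by (intro mult_left_mono) auto
  have e3: "2 * \<mu> * (I2 - \<mu> * D^2) = 2 * \<mu> * I2 - 2 * (\<mu>^2 * D^2)"
    by (simp add: algebra_simps power2_eq_square)
  have e4: "h * (\<mu>^2 * D^2) \<le> 1 * (\<mu>^2 * D^2)"
    using h by (intro mult_right_mono) auto
  have e5: "2 * \<mu> * I2 \<le> 2 * \<mu> * (R * D)" using F3 mu by (intro mult_left_mono) auto
  have e6: "2 * \<mu> * (R * D) \<le> R^2 + \<mu>^2 * D^2"
  proof -
    have "0 \<le> (R - \<mu> * D)^2" by simp
    then show ?thesis by (simp add: power2_eq_square algebra_simps)
  qed
  have s1: "h * \<mu>^2 * (Na - Nb) \<le> R^2" using e1 e2 e3 e4 e5 e6 by linarith
  have "R^2 \<le> (\<eta> * h)^2" using R Re by (intro power_mono) auto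
  then have "h * (\<mu>^2 * (Na - Nb)) \<le> h * (\<eta>^2 * h)" using s1 by (simp add: power2_eq_square algebra_simps)
  then show ?thesis using h by simp
qed

lemma final_real:
  fixes \<mu> ls \<theta> nb A2 e h \<eta> :: real and q :: nat
  assumes mu: "\<mu> > 0" and ls: "ls > 0" and nb: "nb > 0" and q: "q \<ge> 1" and A2: "A2 \<ge> 0"
    and hA: "A2^2 \<le> nb^2 + \<eta>^2 * h" and th: "\<theta> = \<mu> * nb^q" and th2: "\<theta> \<le> ls * A2^q"
    and eta: "\<mu> * q * \<eta>^2 \<le> e * nb^2" and h: "h > 0"
  shows "\<mu> - e * h \<le> ls"
proof -
  define x where "x = \<eta>^2 * h / nb^2"
  have x0: "x \<ge> 0" unfolding x_def using h by simp
  have ex: "nb^2 * (1 + x) = nb^2 + \<eta>^2 * h" unfolding x_def using nb by (simp add: field_simps)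
  have "A2^2 \<le> nb^2 * (1 + x)" unfolding ex by (rule hA)
  also have "\<dots> \<le> nb^2 * (1 + x)^2"
  proof -
    have "0 \<le> x * x" using x0 by simp
    then have "1 + x \<le> (1 + x)^2" using x0 unfolding power2_eq_square by (simp add: algebra_simps)
    then show ?thesis by (intro mult_left_mono) auto
  qed
  also have "\<dots> = (nb * (1 + x))^2" by (simp add: power_mult_distrib)
  finally have sq: "A2^2 \<le> (nb * (1 + x))^2" .
  have "A2 \<le> nb * (1 + x)" using sq by (rule power2_le_imp_le) (use nb x0 in simp)
  then have "A2^q \<le> (nb * (1 + x))^q" using A2 by (intro power_mono) auto
  then have "\<mu> * nb^q \<le> ls * (nb^q * (1 + x)^q)"
  proof -
    have "ls * A2^q \<le> ls * (nb * (1 + x))^q" using \<open>A2^q \<le> _\<close> ls by (intro mult_left_mono) auto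
    then show ?thesis using th th2 by (simp add: power_mult_distrib)
  qed
  then have "nb^q * \<mu> \<le> nb^q * (ls * (1 + x)^q)" by (simp add: algebra_simps)
  then have m1: "\<mu> \<le> ls * (1 + x)^q" using nb by (simp add: mult_le_cancel_left_pos)
  have m2: "\<mu> * (1 - q * x) \<le> ls"
  proof (cases "q * x \<ge> 1")
    case True
    then have "\<mu> * (1 - q * x) \<le> 0" using mu by (simp add: mult_nonneg_nonpos)
    then show ?thesis using ls by simp
  next
    case False
    have "(1::real) \<le> of_nat q" using q by simp
    then have qx: "1 * x \<le> q * x" using x0 by (intro mult_right_mono) auto
    then have x1: "x < 1" using False by simp
    have b: "1 + of_nat q * (- x) \<le> (1 + (- x))^q" by (rule Bernoulli_inequality) (use x1 in simp)
    have "(1 - x) * (1 + x) = 1 - x^2" by (simp add: algebra_simps power2_eq_square)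
    then have "(1 - x)^q * (1 + x)^q = (1 - x^2)^q"
      by (subst power_mult_distrib[symmetric]) (rule arg_cong[where f="\<lambda>y. y^q"])
    also have "\<dots> \<le> 1"
    proof -
      have "x^2 \<le> 1" using x0 x1 by (intro power_le_one) auto
      moreover have "0 \<le> x^2" by simp
      ultimately show ?thesis by (intro power_le_one) auto
    qed
    finally have c: "(1 - x)^q * (1 + x)^q \<le> 1" .
    have "\<mu> * (1 - q * x) \<le> \<mu> * (1 - x)^q" using b mu by (intro mult_left_mono) auto
    also have "\<dots> \<le> ls * (1 + x)^q * (1 - x)^q"
      using m1 x1 by (intro mult_right_mono) auto
    also have "\<dots> = ls * ((1 - x)^q * (1 + x)^q)" by simp
    also have "\<dots> \<le> ls * 1" using c ls by (intro mult_left_mono) auto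
    finally show ?thesis by simp
  qed
  have "\<mu> * q * x \<le> e * h"
  proof -
    have "\<mu> * q * x = (\<mu> * q * \<eta>^2) * h / nb^2" unfolding x_def by simp
    also have "\<dots> \<le> (e * nb^2) * h / nb^2" using eta h nb by (intro divide_right_mono mult_right_mono) auto
    also have "\<dots> = e * h" using nb by simp
    finally show ?thesis .
  qed
  then show ?thesis using m2 by (simp add: algebra_simps)
qed





lemma real_R2:
  fixes a b m1 m2 :: real
  assumes a: "a \<ge> 0" and b: "b \<ge> 0" and m: "0 < m1" "m1 \<le> m2"
    and H: "m1 * a^2 + m2 * b^2 \<le> (m1 + m2) * (a * b)"
  shows "m1 * a \<le> m2 * b"
proof (rule ccontr)
  assume "\<not> m1 * a \<le> m2 * b"
  then have g: "m1 * a > m2 * b" by simp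
  have "m2 * b \<ge> m1 * b" using m b by (simp add: mult_right_mono)
  then have "m1 * a > m1 * b" using g by simp
  then have ab: "a > b" using m by simp
  have "(m1 * a - m2 * b) * (a - b) > 0" using g ab by simp
  moreover have "(m1 * a - m2 * b) * (a - b) = m1 * a^2 + m2 * b^2 - (m1 + m2) * (a * b)"
    by (simp add: algebra_simps power2_eq_square)
  ultimately show False using H by simp
qed

lemma res_mono:
  fixes A :: "'a::{real_inner,complete_space} \<Rightarrow> 'a set"
  assumes mm: "maximal_monotone A" and zer: "\<exists>z. 0 \<in> A z" and m: "0 < m1" "m1 \<le> m2"
  shows "norm (y - resolvent A m1 y) \<le> norm (y - resolvent A m2 y)"
proof -
  have mA: "monotone_op A" using mm unfolding maximal_monotone_def by blast
  define J1 where "J1 = resolvent A m1 y"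
  define J2 where "J2 = resolvent A m2 y"
  define v1 where "v1 = (1/m1) *\<^sub>R (y - J1)"
  define v2 where "v2 = (1/m2) *\<^sub>R (y - J2)"
  have m2: "0 < m2" using m by simp
  have h1: "v1 \<in> A J1" unfolding v1_def J1_def by (rule resolvent_prop[OF mm zer m(1)])
  have h2: "v2 \<in> A J2" unfolding v2_def J2_def by (rule resolvent_prop[OF mm zer m2])
  have w1: "y - J1 = m1 *\<^sub>R v1" unfolding v1_def using m by simp
  have w2: "y - J2 = m2 *\<^sub>R v2" unfolding v2_def using m2 by simp
  have "0 \<le> inner (J1 - J2) (v1 - v2)" using mA h1 h2 unfolding monotone_op_def by blast
  moreover have "J1 - J2 = m2 *\<^sub>R v2 - m1 *\<^sub>R v1" using w1 w2 by (simp add: algebra_simps)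
  ultimately have "0 \<le> inner (m2 *\<^sub>R v2 - m1 *\<^sub>R v1) (v1 - v2)" by simp
  then have "0 \<le> (m1 + m2) * inner v1 v2 - m1 * inner v1 v1 - m2 * inner v2 v2"
    by (simp add: inner_diff_left inner_diff_right inner_commute algebra_simps)
  moreover have "inner v1 v2 \<le> norm v1 * norm v2" by (rule norm_cauchy_schwarz)
  moreover have "(m1 + m2) * inner v1 v2 \<le> (m1 + m2) * (norm v1 * norm v2)"
    using calculation(2) m m2 by (intro mult_left_mono) auto
  ultimately have "m1 * (norm v1)^2 + m2 * (norm v2)^2 \<le> (m1 + m2) * (norm v1 * norm v2)"
    by (simp add: power2_norm_eq_inner)
  then have "m1 * norm v1 \<le> m2 * norm v2" by (rule real_R2[OF norm_ge_zero norm_ge_zero m])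
  then show ?thesis using w1 w2 m m2 unfolding J1_def[symmetric] J2_def[symmetric] by simp
qed

lemma res_firm:
  fixes A :: "'a::{real_inner,complete_space} \<Rightarrow> 'a set"
  assumes mm: "maximal_monotone A" and zer: "\<exists>z. 0 \<in> A z" and mu: "0 < \<mu>"
  shows "\<mu> * norm ((1/\<mu>) *\<^sub>R (a - resolvent A \<mu> a) - (1/\<mu>) *\<^sub>R (b - resolvent A \<mu> b)) ^ 2
     \<le> inner (a - b) ((1/\<mu>) *\<^sub>R (a - resolvent A \<mu> a) - (1/\<mu>) *\<^sub>R (b - resolvent A \<mu> b))"
proof -
  have mA: "monotone_op A" using mm unfolding maximal_monotone_def by blast
  define al where "al = (1/\<mu>) *\<^sub>R (a - resolvent A \<mu> a)"
  define be where "be = (1/\<mu>) *\<^sub>R (b - resolvent A \<mu> b)"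
  have h1: "al \<in> A (resolvent A \<mu> a)" unfolding al_def by (rule resolvent_prop[OF mm zer mu])
  have h2: "be \<in> A (resolvent A \<mu> b)" unfolding be_def by (rule resolvent_prop[OF mm zer mu])
  have "0 \<le> inner (resolvent A \<mu> a - resolvent A \<mu> b) (al - be)"
    using mA h1 h2 unfolding monotone_op_def by blast
  moreover have "resolvent A \<mu> a - resolvent A \<mu> b = (a - b) - \<mu> *\<^sub>R (al - be)"
    unfolding al_def be_def using mu by (simp add: algebra_simps)
  ultimately have "0 \<le> inner (a - b) (al - be) - \<mu> * inner (al - be) (al - be)"
    by (simp add: inner_diff_left)
  then show ?thesis unfolding al_def[symmetric] be_def[symmetric] by (simp add: power2_norm_eq_inner)
qed

lemma dini_mono:
  fixes f :: "real \<Rightarrow> real"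
  assumes cont: "continuous_on {a..b} f"
    and loc: "\<And>t e. t \<in> {a..<b} \<Longrightarrow> e > 0 \<Longrightarrow>
       \<exists>d>0. \<forall>s. t < s \<and> s < t + d \<and> s \<le> b \<longrightarrow> f t - e * (s - t) \<le> f s"
  shows "mono_on {a..b} f"
proof (rule mono_onI)
  fix r s assume r: "r \<in> {a..b}" and s: "s \<in> {a..b}" and rs: "r \<le> s"
  have key: "f r \<le> f s + e * (s - r)" if e: "e > 0" for e
  proof -
    define g where "g \<tau> = f \<tau> - f r + e * (\<tau> - r)" for \<tau>
    define T where "T = {r..s} \<inter> g -` {0..}"
    have sub: "{r..s} \<subseteq> {a..b}" using r s by auto
    have cg: "continuous_on {r..s} g" unfolding g_def
      by (intro continuous_intros continuous_on_subset[OF cont sub])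
    have clT: "closed T" unfolding T_def by (rule continuous_closed_preimage[OF cg]) auto
    have rT: "r \<in> T" unfolding T_def g_def using rs by auto
    have bdT: "bdd_above T" unfolding T_def by (rule bdd_aboveI[of _ s]) auto
    define \<sigma> where "\<sigma> = Sup T"
    have sT: "\<sigma> \<in> T" unfolding \<sigma>_def using closed_contains_Sup[OF _ bdT clT] rT by blast
    have sig: "r \<le> \<sigma>" "\<sigma> \<le> s" using sT unfolding T_def by auto
    have "\<sigma> = s"
    proof (rule ccontr)
      assume "\<sigma> \<noteq> s"
      then have ls: "\<sigma> < s" using sig by simp
      have "\<sigma> \<in> {a..<b}" using ls sig r s by auto
      then obtain d where d: "d > 0" and dd: "\<And>s'. \<sigma> < s' \<and> s' < \<sigma> + d \<and> s' \<le> b \<longrightarrow> f \<sigma> - e * (s' - \<sigma>) \<le> f s'"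
        using loc[OF _ e] by blast
      define \<tau> where "\<tau> = min (\<sigma> + d / 2) s"
      have tau: "\<sigma> < \<tau>" "\<tau> < \<sigma> + d" "\<tau> \<le> s" "\<tau> \<le> b" using d ls s unfolding \<tau>_def by auto
      have "f \<sigma> - e * (\<tau> - \<sigma>) \<le> f \<tau>" using dd tau by blast
      moreover have "0 \<le> g \<sigma>" using sT unfolding T_def by auto
      ultimately have "0 \<le> g \<tau>" unfolding g_def by (simp add: algebra_simps)
      then have "\<tau> \<in> T" unfolding T_def using tau sig by auto
      then have "\<tau> \<le> \<sigma>" unfolding \<sigma>_def by (rule cSup_upper[OF _ bdT])
      then show False using tau by simp
    qed
    then have "0 \<le> g s" using sT unfolding T_def by auto
    then show ?thesis unfolding g_def by simp
  qed
  show "f r \<le> f s"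
  proof (rule le_lim0[of "f r" "f s" "s - r"])
    fix t :: real assume "0 < t" "t \<le> 1"
    then show "f r \<le> f s + t * (s - r)" using key by blast
  qed (use rs in simp)
qed




theorem lemma2p5:
  fixes A :: "'a::{real_inner,complete_space} \<Rightarrow> 'a set"
    and x x' :: "real \<Rightarrow> 'a" and lam :: "real \<Rightarrow> real"
    and \<theta> t0 :: real and p :: nat
  assumes maxmono: "maximal_monotone A"
    and zer: "\<exists>z. 0 \<in> A z"
    and theta_pos: "\<theta> > 0"
    and p_ge: "p \<ge> 1"
    and t0_pos: "t0 > 0"
    and lam_pos: "\<forall>t\<in>{0..t0}. lam t > 0"
    and deriv: "\<forall>t\<in>{0..t0}. (x has_vector_derivative x' t) (at t within {0..t0})"
    and deriv_cont: "continuous_on {0..t0} x'"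
    and lam_lip: "locally_lipschitz_on {0..t0} lam"
    and ode: "\<forall>t\<in>{0..t0}. x' t + x t - resolvent A (lam t) (x t) = 0"
    and alg: "\<forall>t\<in>{0..t0}. lam t * norm (resolvent A (lam t) (x t) - x t) ^ (p - 1) = \<theta>"
    and init: "0 \<notin> A (x 0)"
  shows "mono_on {0..t0} lam"
proof (cases "p = 1")
  case True
  then have "\<forall>t\<in>{0..t0}. lam t = \<theta>" using alg by simp
  then show ?thesis by (intro mono_onI) simp
next
  case False
  define q where "q = p - 1"
  have q1: "q \<ge> 1" using p_ge False unfolding q_def by simp
  define J where "J t = resolvent A (lam t) (x t)" for t
  define u where "u t = x t - J t" for t
  have x'u: "x' t = - u t" if "t \<in> {0..t0}" for t
  proof -
    have "x' t + x t - J t = 0" using ode that unfolding J_def by blast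
    then show ?thesis unfolding u_def by (simp add: algebra_simps)
  qed
  have alg': "lam t * norm (u t) ^ q = \<theta>" if "t \<in> {0..t0}" for t
    using alg that unfolding u_def J_def q_def by (simp add: norm_minus_commute)
  have unz: "norm (u t) > 0" if "t \<in> {0..t0}" for t
  proof (rule ccontr)
    assume "\<not> norm (u t) > 0"
    then have "norm (u t) = 0" by simp
    then have "\<theta> = 0" using alg'[OF that] q1 by (simp add: zero_power)
    then show False using theta_pos by simp
  qed
  have lam_eq: "lam t = \<theta> / norm (x' t) ^ q" if "t \<in> {0..t0}" for t
  proof -
    have "norm (x' t) = norm (u t)" using x'u[OF that] by simp
    moreover have "norm (u t) ^ q > 0" using unz[OF that] by simp
    ultimately show ?thesis using alg'[OF that] by (metis nonzero_mult_div_cancel_right less_irrefl)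
  qed
  have cont: "continuous_on {0..t0} lam"
  proof -
    have nz: "\<forall>t\<in>{0..t0}. norm (x' t) ^ q \<noteq> 0" using unz x'u by simp
    have "continuous_on {0..t0} (\<lambda>t. \<theta> / norm (x' t) ^ q)"
      by (rule continuous_on_divide[OF continuous_on_const continuous_on_power[OF continuous_on_norm[OF deriv_cont]] nz])
    then show ?thesis by (rule continuous_on_eq) (simp add: lam_eq)
  qed
  show ?thesis
  proof (rule dini_mono[OF cont])
    fix t e :: real assume t: "t \<in> {0..<t0}" and e: "e > 0"
    have tI: "t \<in> {0..t0}" using t by auto
    define \<mu> where "\<mu> = lam t"
    have mu: "\<mu> > 0" using lam_pos tI unfolding \<mu>_def by blast
    define nb where "nb = norm (u t)"
    have nb: "nb > 0" using unz[OF tI] unfolding nb_def .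
    have th: "\<theta> = \<mu> * nb ^ q" using alg'[OF tI] unfolding \<mu>_def nb_def by simp
    define K where "K = e * nb^2 / (\<mu> * q)"
    have K: "K > 0" unfolding K_def using e nb mu q1 by simp
    define \<eta> where "\<eta> = min 1 K"
    have eta0: "\<eta> > 0" unfolding \<eta>_def using K by simp
    have "\<eta>^2 \<le> 1 * K" unfolding power2_eq_square \<eta>_def using K by (intro mult_mono) auto
    then have "\<mu> * q * \<eta>^2 \<le> \<mu> * q * K" using mu by (intro mult_left_mono) auto
    also have "\<dots> = e * nb^2" unfolding K_def using mu q1 by simp
    finally have eta: "\<mu> * q * \<eta>^2 \<le> e * nb^2" .
    have "(x has_derivative (\<lambda>h. h *\<^sub>R x' t)) (at t within {0..t0})"
      using deriv tI unfolding has_vector_derivative_def by blast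
    then have "\<forall>e>0. \<exists>d>0. \<forall>y\<in>{0..t0}. norm (y - t) < d \<longrightarrow>
        norm (x y - x t - (y - t) *\<^sub>R x' t) \<le> e * norm (y - t)"
      unfolding has_derivative_within_alt by (rule conjunct2)
    then obtain d1 where d1: "d1 > 0" and
      dd1: "\<forall>y\<in>{0..t0}. norm (y - t) < d1 \<longrightarrow>
              norm (x y - x t - (y - t) *\<^sub>R x' t) \<le> \<eta> * norm (y - t)"
      using eta0 by blast
    show "\<exists>d>0. \<forall>s. t < s \<and> s < t + d \<and> s \<le> t0 \<longrightarrow> lam t - e * (s - t) \<le> lam s"
    proof (intro exI[of _ "min d1 1"] conjI allI impI)
      show "0 < min d1 1" using d1 by simp
      fix s assume s: "t < s \<and> s < t + min d1 1 \<and> s \<le> t0"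
      define h where "h = s - t"
      have h: "0 < h" "h \<le> 1" using s unfolding h_def by auto
      have sI: "s \<in> {0..t0}" using s tI by auto
      have dx: "norm (x s - x t - h *\<^sub>R x' t) \<le> \<eta> * h"
      proof -
        have "norm (s - t) < d1" using s by (simp add: min_def split: if_splits)
        then have "norm (x s - x t - (s - t) *\<^sub>R x' t) \<le> \<eta> * norm (s - t)" using dd1 sI by blast
        then show ?thesis unfolding h_def using s by simp
      qed
      define r where "r = x s - x t - h *\<^sub>R x' t"
      define al where "al = (1/\<mu>) *\<^sub>R (x s - resolvent A \<mu> (x s))"
      define be where "be = (1/\<mu>) *\<^sub>R (x t - resolvent A \<mu> (x t))"
      have be_u: "be = (1/\<mu>) *\<^sub>R u t" unfolding be_def u_def J_def \<mu>_def ..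
      have firm: "\<mu> * norm (al - be) ^ 2 \<le> inner (x s - x t) (al - be)"
        unfolding al_def be_def by (rule res_firm[OF maxmono zer mu])
      have xd: "x s - x t = r - (h * \<mu>) *\<^sub>R be"
        unfolding r_def be_u using x'u[OF tI] mu by simp
      have F4: "\<mu> * norm (al - be) ^ 2 \<le> inner r (al - be) - h * \<mu> * inner be (al - be)"
        using firm unfolding xd by (simp add: inner_diff_left)
      have F2: "norm al ^ 2 = norm be ^ 2 + 2 * inner be (al - be) + norm (al - be) ^ 2"
        using nsq_add[of be "al - be"] by simp
      have F3: "inner r (al - be) \<le> norm r * norm (al - be)" by (rule norm_cauchy_schwarz)
      have Q: "\<mu>^2 * (norm al ^ 2 - norm be ^ 2) \<le> \<eta>^2 * h"
        by (rule quad_est[OF mu h norm_ge_zero norm_ge_zero F4 F2 F3]) (use dx r_def in simp)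
      define A2 where "A2 = norm (x s - resolvent A \<mu> (x s))"
      have nal: "\<mu> * norm al = A2" unfolding al_def A2_def using mu by simp
      have nbe: "\<mu> * norm be = nb" unfolding be_u nb_def using mu by simp
      have hA: "A2^2 \<le> nb^2 + \<eta>^2 * h"
      proof -
        have "A2^2 - nb^2 = \<mu>^2 * (norm al ^ 2 - norm be ^ 2)"
          unfolding nal[symmetric] nbe[symmetric] by (simp add: power_mult_distrib algebra_simps)
        then show ?thesis using Q by simp
      qed
      have lsp: "lam s > 0" using lam_pos sI by blast
      show "lam t - e * (s - t) \<le> lam s"
      proof (cases "lam s \<ge> \<mu>")
        case True
        moreover have "e * (s - t) > 0" using e s by simp
        ultimately show ?thesis unfolding \<mu>_def by linarith
      next
        case False
        have "norm (u s) \<le> A2"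
          unfolding u_def J_def A2_def using False lsp by (intro res_mono[OF maxmono zer]) auto
        then have "norm (u s) ^ q \<le> A2 ^ q" by (intro power_mono) auto
        then have "lam s * norm (u s) ^ q \<le> lam s * A2 ^ q"
          using lsp by (intro mult_left_mono) auto
        then have th2: "\<theta> \<le> lam s * A2 ^ q" using alg'[OF sI] by simp
        have "\<mu> - e * h \<le> lam s"
          by (rule final_real[OF mu lsp nb q1 _ hA th th2 eta h(1)]) (simp add: A2_def)
        then show ?thesis unfolding \<mu>_def h_def .
      qed
    qed
  qed
qed


end
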